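(* Let $a\in\mathbb{R}$, $b>0$, $\mu\in\mathbb{R}$, $\lambda\in(0,1)$, $\gamma\in\mathbb{R}$ and $\Delta\in\mathbb{N}$, and consider the impulsive difference equation $$x_{n+1}=\begin{cases} f(x_n), & n\in\mathbb{N},\ n\notin\{i\Delta: i\in\mathbb{N}\},\\ f(x_n)+\gamma, & n=i\Delta \text{ for some } i\in\mathbb{N},\end{cases}$$ with $f(x)=(1-\lambda)x+\frac{a\lambda}{b}-\frac{\lambda\arctan(\mu x)}{b}$ and arbitrary initial value $x_1\in\mathbb{R}$. Then: (i) every solution $(x_n)_{n\in\mathbb{N}}$ is bounded on $\mathbb{N}$; (ii) let $A=\frac{|a|}{b}+\frac{\pi}{2b}$ and let $k_-<k_+$ be real numbers with $2A\le k_+-k_-$. If $\gamma$ satisfies $$(k_-+A)\bigl(1-(1-\lambda)^{\Delta}\bigr)\le\gamma\le (k_+-A)\bigl(1-(1-\lambda)^{\Delta}\bigr),$$ then the map $F(x)=f^{\Delta}(x)+\gamma$ maps $[k_-,k_+]$ into itself and has a fixed point $x_1^*\in[k_-,k_+]$; consequently the equation has a $\Delta$-periodic orbit (i.e. $x_{n+\Delta}=x_n$ for all $n\in\mathbb{N}$) starting from $x_1^*\in[k_-,k_+]$.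
   Context: $f^{\Delta}$ denotes the $\Delta$-fold composition of $f$. The solution of the impulsive equation satisfies $x_{i\Delta+1}=F^i(x_1)$ for all $i\in\mathbb{N}$, where $F=f^\Delta+\gamma$. This equation models a supply and demand (price expectation) model perturbed by a constant impulse $\gamma$ every $\Delta$ steps. *)

theory Defs
  imports "HOL-Analysis.Analysis"
begin

definition fmap :: "real \<Rightarrow> real \<Rightarrow> real \<Rightarrow> real \<Rightarrow> real \<Rightarrow> real" where
  "fmap a b mu lam x = (1 - lam) * x + a * lam / b - lam * arctan (mu * x) / b"

text \<open>A solution of the impulsive equation, indexed from 1 (index 0 unused):
  x (n+1) = f (x n) for n not a multiple of Delta, x (n+1) = f (x n) + gamma for n = i*Delta, i \<ge> 1.\<close>
definition is_impulsive_sol ::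
  "real \<Rightarrow> real \<Rightarrow> real \<Rightarrow> real \<Rightarrow> real \<Rightarrow> nat \<Rightarrow> (nat \<Rightarrow> real) \<Rightarrow> bool" where
  "is_impulsive_sol a b mu lam gam Delta x \<longleftrightarrow>
     (\<forall>n\<ge>1. x (Suc n) = (if (\<exists>i\<ge>1. n = i * Delta) then fmap a b mu lam (x n) + gam
                           else fmap a b mu lam (x n)))"

end

theory Submission
  imports Defs
begin

lemma fmap_bounds:
  assumes b: "b > 0" and l: "0 < lam"
  shows "\<bar>fmap a b mu lam x - (1 - lam) * x\<bar> \<le> lam * (\<bar>a\<bar> / b + pi / (2 * b))"
proof -
  have e: "fmap a b mu lam x - (1 - lam) * x = lam * ((a - arctan (mu * x)) / b)"
    unfolding fmap_def using b by (simp add: field_simps)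
  have "\<bar>arctan (mu * x)\<bar> \<le> pi / 2" using arctan_bounded[of "mu*x"] by auto
  hence "\<bar>a - arctan (mu * x)\<bar> \<le> \<bar>a\<bar> + pi/2" by linarith
  hence h1: "\<bar>(a - arctan (mu * x)) / b\<bar> \<le> (\<bar>a\<bar> + pi/2) / b"
    using b by (simp add: abs_div divide_right_mono)
  have h2: "(\<bar>a\<bar> + pi/2) / b = \<bar>a\<bar> / b + pi / (2 * b)" using b by (simp add: field_simps)
  have "\<bar>(a - arctan (mu * x)) / b\<bar> \<le> \<bar>a\<bar> / b + pi / (2 * b)" using h1 h2 by simp
  hence "lam * \<bar>(a - arctan (mu * x)) / b\<bar> \<le> lam * (\<bar>a\<bar> / b + pi / (2 * b))"
    by (rule mult_left_mono) (use l in simp_all)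
  thus ?thesis unfolding e using l by (simp only: abs_mult abs_of_pos)
qed

lemma funpow_bounds:
  assumes b: "b > 0" and l: "0 < lam" "lam < 1"
  shows "\<bar>(fmap a b mu lam ^^ k) x - (1 - lam) ^ k * x\<bar> \<le> (\<bar>a\<bar> / b + pi / (2 * b)) * (1 - (1 - lam) ^ k)"
proof -
  define A where "A = \<bar>a\<bar> / b + pi / (2 * b)"
  have "\<bar>(fmap a b mu lam ^^ k) x - (1 - lam) ^ k * x\<bar> \<le> A * (1 - (1 - lam) ^ k)"
proof (induction k)
  case 0 then show ?case by simp
next
  case (Suc k)
  let ?y = "(fmap a b mu lam ^^ k) x"
  have h: "\<bar>fmap a b mu lam ?y - (1 - lam) * ?y\<bar> \<le> lam * A"
    using fmap_bounds[OF b l(1)] unfolding A_def by blast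
  have "\<bar>(1 - lam) * ?y - (1 - lam) * ((1 - lam) ^ k * x)\<bar> \<le> (1 - lam) * (A * (1 - (1 - lam) ^ k))"
    using Suc l by (simp add: abs_mult mult_left_mono flip: right_diff_distrib)
  with h have "\<bar>fmap a b mu lam ?y - (1 - lam) ^ Suc k * x\<bar> \<le> lam * A + (1 - lam) * (A * (1 - (1 - lam) ^ k))"
    by (simp add: mult.assoc)
  also have "\<dots> = A * (1 - (1 - lam) ^ Suc k)" by (simp add: algebra_simps)
  finally show ?case by simp
qed
  thus ?thesis unfolding A_def .
qed

lemma cont_fmap: "continuous_on UNIV (fmap a b mu lam)"
  unfolding fmap_def divide_inverse by (intro continuous_intros)

lemma cont_funpow: "continuous_on UNIV (fmap a b mu lam ^^ k)"
proof (induction k)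
  case 0 then show ?case by (simp add: continuous_on_id)
next
  case (Suc k)
  have "continuous_on UNIV (fmap a b mu lam \<circ> (fmap a b mu lam ^^ k))"
    by (rule continuous_on_compose) (use Suc continuous_on_subset[OF cont_fmap subset_UNIV] in auto)
  then show ?case by simp
qed

theorem theorem1:
  fixes a b mu lam gam :: real and Delta :: nat
  assumes "b > 0" and "0 < lam" and "lam < 1" and "Delta \<ge> 1"
  shows "(\<forall>x. is_impulsive_sol a b mu lam gam Delta x \<longrightarrow> bounded (x ` {1..}))
    \<and> (\<forall>km kp. let A = \<bar>a\<bar> / b + pi / (2 * b);
                    F = (\<lambda>y. (fmap a b mu lam ^^ Delta) y + gam) in
         km < kp \<longrightarrow> 2 * A \<le> kp - km \<longrightarrow>
         (km + A) * (1 - (1 - lam) ^ Delta) \<le> gam \<longrightarrow>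
         gam \<le> (kp - A) * (1 - (1 - lam) ^ Delta) \<longrightarrow>
           F ` {km..kp} \<subseteq> {km..kp} \<and>
           (\<exists>xs\<in>{km..kp}. F xs = xs \<and>
              (\<forall>x. is_impulsive_sol a b mu lam gam Delta x \<and> x 1 = xs \<longrightarrow>
                   (\<forall>n\<ge>1. x (n + Delta) = x n))))"
proof -
  note b = assms(1) and l = assms(2,3) and D = assms(4)
  define A where "A = \<bar>a\<bar> / b + pi / (2 * b)"
  define f where "f = fmap a b mu lam"
  have fb: "\<bar>f y - (1 - lam) * y\<bar> \<le> lam * A" for y
    using fmap_bounds[OF b l(1)] unfolding A_def f_def by blast
  have part1: "bounded (x ` {1..})" if sol: "is_impulsive_sol a b mu lam gam Delta x" for x
  proof -
    define M where "M = max \<bar>x 1\<bar> (A + \<bar>gam\<bar> / lam)"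
    have lM: "lam * M \<ge> lam * A + \<bar>gam\<bar>"
    proof -
      have "lam * M \<ge> lam * (A + \<bar>gam\<bar> / lam)" unfolding M_def using l by (simp add: mult_left_mono)
      moreover have "lam * (A + \<bar>gam\<bar> / lam) = lam * A + \<bar>gam\<bar>" using l by (simp add: distrib_left)
      ultimately show ?thesis by simp
    qed
    have "\<bar>x n\<bar> \<le> M" if "n \<ge> 1" for n
      using that
    proof (induction n rule: dec_induct)
      case base then show ?case unfolding M_def by simp
    next
      case (step n)
      have s: "\<bar>x (Suc n)\<bar> \<le> \<bar>f (x n)\<bar> + \<bar>gam\<bar>"
        using sol step(1) unfolding is_impulsive_sol_def f_def by (auto split: if_splits)
      have "\<bar>f (x n)\<bar> \<le> (1 - lam) * \<bar>x n\<bar> + lam * A"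
      proof -
        have "\<bar>(1 - lam) * x n\<bar> = (1 - lam) * \<bar>x n\<bar>" using l by (simp add: abs_mult)
        thus ?thesis using fb[of "x n"] by linarith
      qed
      moreover have "(1 - lam) * \<bar>x n\<bar> \<le> (1 - lam) * M" using step l by (simp add: mult_left_mono)
      ultimately show ?case using s lM by (simp add: algebra_simps)
    qed
    thus ?thesis unfolding bounded_iff by (intro exI[of _ M]) auto
  qed
  have part2: "F ` {km..kp} \<subseteq> {km..kp} \<and>
           (\<exists>xs\<in>{km..kp}. F xs = xs \<and>
              (\<forall>x. is_impulsive_sol a b mu lam gam Delta x \<and> x 1 = xs \<longrightarrow>
                   (\<forall>n\<ge>1. x (n + Delta) = x n)))"
    if F: "F = (\<lambda>y. (f ^^ Delta) y + gam)" and k: "km < kp"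
      and g1: "(km + A) * (1 - (1 - lam) ^ Delta) \<le> gam"
      and g2: "gam \<le> (kp - A) * (1 - (1 - lam) ^ Delta)" for F km kp
  proof -
    define q where "q = (1 - lam) ^ Delta"
    have q: "0 \<le> q" "q \<le> 1" unfolding q_def using l by (auto intro: power_le_one)
    have pb: "\<bar>(f ^^ Delta) y - q * y\<bar> \<le> A * (1 - q)" for y
      using funpow_bounds[OF b l] unfolding A_def f_def q_def by blast
    have maps: "F y \<in> {km..kp}" if "y \<in> {km..kp}" for y
    proof -
      have "q * km \<le> q * y" "q * y \<le> q * kp" using that q by (auto intro: mult_left_mono)
      thus ?thesis using pb[of y] g1 g2 unfolding F q_def[symmetric]
        by (simp add: algebra_simps) linarith
    qed
    have cF: "continuous_on {km..kp} (\<lambda>y. y - F y)"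
      unfolding F f_def
      by (intro continuous_intros continuous_on_subset[OF cont_funpow]) auto
    have "km - F km \<le> 0" "0 \<le> kp - F kp" using maps[of km] maps[of kp] k by auto
    then obtain xs where xs: "km \<le> xs" "xs \<le> kp" "xs - F xs = 0"
      using IVT'[of "\<lambda>y. y - F y" km 0 kp] cF k by auto
    have per: "\<forall>n\<ge>1. x (n + Delta) = x n"
      if sol: "is_impulsive_sol a b mu lam gam Delta x" and x1: "x 1 = xs" for x
    proof -
      have st: "x (Suc n) = (if (\<exists>i\<ge>1. n = i * Delta) then f (x n) + gam else f (x n))"
        if "n \<ge> 1" for n using sol that unfolding is_impulsive_sol_def f_def by blast
      have pre: "x (Suc k) = (f ^^ k) (x 1)" if "k < Delta" for k
        using that
      proof (induction k)
        case 0 then show ?case by simp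
      next
        case (Suc k)
        have nh: "\<not> (\<exists>i\<ge>1. Suc k = i * Delta)"
        proof
          assume "\<exists>i\<ge>1. Suc k = i * Delta"
          then obtain i where "i \<ge> 1" "Suc k = i * Delta" by blast
          have "1 * Delta \<le> i * Delta" by (rule mult_le_mono1) fact
          hence "Suc k \<ge> Delta" using \<open>Suc k = i * Delta\<close> by simp
          with Suc.prems show False by simp
        qed
        have "x (Suc (Suc k)) = (if (\<exists>i\<ge>1. Suc k = i * Delta) then f (x (Suc k)) + gam else f (x (Suc k)))"
          by (rule st) simp
        also have "\<dots> = f (x (Suc k))" using nh by (rule if_not_P)
        finally have "x (Suc (Suc k)) = f (x (Suc k))" .
        then show ?case using Suc by simp
      qed
      have "x (Suc Delta) = F (x 1)"
      proof -
        obtain m where m: "Delta = Suc m" using D by (cases Delta) auto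
        have c: "\<exists>i\<ge>1. Delta = i * Delta" by (intro exI[of _ 1]) simp
        have "x (Suc Delta) = (if (\<exists>i\<ge>1. Delta = i * Delta) then f (x Delta) + gam else f (x Delta))"
          by (rule st) (rule D)
        also have "\<dots> = f (x Delta) + gam" using c by (rule if_P)
        also have "x Delta = (f ^^ m) (x 1)" using pre[of m] m by simp
        finally show ?thesis unfolding F m by simp
      qed
      hence base: "x (1 + Delta) = x 1" using xs x1 by simp
      have cond: "(\<exists>i\<ge>1. n + Delta = i * Delta) \<longleftrightarrow> (\<exists>i\<ge>1. n = i * Delta)" if "n \<ge> 1" for n
      proof
        assume "\<exists>i\<ge>1. n + Delta = i * Delta"
        then obtain i where i1: "i \<ge> 1" and i2: "n + Delta = i * Delta" by (elim exE conjE)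
        obtain j where j: "i = Suc j" using i1 by (cases i) auto
        have nj: "n = j * Delta" using i2 unfolding j by simp
        have "j \<noteq> 0" using nj that by (cases j) auto
        hence "j \<ge> 1" by simp
        thus "\<exists>i\<ge>1. n = i * Delta" using nj by (intro exI[of _ j]) simp
      next
        assume "\<exists>i\<ge>1. n = i * Delta"
        then obtain i where "i \<ge> 1" and ni: "n = i * Delta" by (elim exE conjE)
        have "n + Delta = Suc i * Delta" unfolding ni by simp
        thus "\<exists>i\<ge>1. n + Delta = i * Delta" by (intro exI[of _ "Suc i"]) simp
      qed
      show ?thesis
      proof (intro allI impI)
        fix n :: nat assume "n \<ge> 1"
        thus "x (n + Delta) = x n"
        proof (induction n rule: dec_induct)
          case base then show ?case using \<open>x (1 + Delta) = x 1\<close> by simp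
        next
          case (step n)
          have "x (Suc n + Delta) = x (Suc (n + Delta))" by simp
          also have "\<dots> = (if (\<exists>i\<ge>1. n + Delta = i * Delta) then f (x (n + Delta)) + gam else f (x (n + Delta)))"
            using st[of "n + Delta"] step(1) by simp
          also have "\<dots> = x (Suc n)" by (simp only: cond[OF step(1)] step(3) st[OF step(1)])
          finally show ?case .
        qed
      qed
    qed
    show ?thesis
    proof (intro conjI bexI[of _ xs])
      show "F ` {km..kp} \<subseteq> {km..kp}" using maps by blast
      show "F xs = xs" using xs(3) by simp
      show "\<forall>x. is_impulsive_sol a b mu lam gam Delta x \<and> x 1 = xs \<longrightarrow> (\<forall>n\<ge>1. x (n + Delta) = x n)"
        using per by blast
      show "xs \<in> {km..kp}" using xs by simp
    qed
  qed
  show ?thesis unfolding Let_def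
  proof (rule conjI)
    show "\<forall>x. is_impulsive_sol a b mu lam gam Delta x \<longrightarrow> bounded (x ` {1..})"
      using part1 by blast
  next
    show "\<forall>km kp. km < kp \<longrightarrow>
      2 * (\<bar>a\<bar> / b + pi / (2 * b)) \<le> kp - km \<longrightarrow>
      (km + (\<bar>a\<bar> / b + pi / (2 * b))) * (1 - (1 - lam) ^ Delta) \<le> gam \<longrightarrow>
      gam \<le> (kp - (\<bar>a\<bar> / b + pi / (2 * b))) * (1 - (1 - lam) ^ Delta) \<longrightarrow>
      (\<lambda>y. (fmap a b mu lam ^^ Delta) y + gam) ` {km..kp} \<subseteq> {km..kp} \<and>
      (\<exists>xs\<in>{km..kp}. (fmap a b mu lam ^^ Delta) xs + gam = xs \<and>
          (\<forall>x. is_impulsive_sol a b mu lam gam Delta x \<and> x 1 = xs \<longrightarrow>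
               (\<forall>n\<ge>1. x (n + Delta) = x n)))"
    proof (intro allI impI)
      fix km kp :: real
      assume h: "km < kp" "2 * (\<bar>a\<bar> / b + pi / (2 * b)) \<le> kp - km" "(km + (\<bar>a\<bar> / b + pi / (2 * b))) * (1 - (1 - lam) ^ Delta) \<le> gam"
        "gam \<le> (kp - (\<bar>a\<bar> / b + pi / (2 * b))) * (1 - (1 - lam) ^ Delta)"
      from part2[OF refl h(1) h(3,4)[folded A_def]]
      show "(\<lambda>y. (fmap a b mu lam ^^ Delta) y + gam) ` {km..kp} \<subseteq> {km..kp} \<and>
      (\<exists>xs\<in>{km..kp}. (fmap a b mu lam ^^ Delta) xs + gam = xs \<and>
          (\<forall>x. is_impulsive_sol a b mu lam gam Delta x \<and> x 1 = xs \<longrightarrow>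
               (\<forall>n\<ge>1. x (n + Delta) = x n)))" unfolding f_def .
    qed
  qed
qed

end
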